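(* Let $H\in\mathbb R^{n\times n}$, $f\in\mathbb R^n$, $A\in\mathbb R^{m\times n}$, $b\in\mathbb R^m$, with $\mathcal X=\{x\in\mathbb R^n: Ax\le b\}$ nonempty and $H+H^\top$ positive definite. Let $x^*$ be the unique solution of the affine variational inequality: find $x\in\mathcal X$ with $(Hx+f)^\top(y-x)\ge0$ for all $y\in\mathcal X$, and let $\mathcal A=\{i\in\{1,\dots,m\}: A_ix^*=b_i\}$. Assume (LICQ) the rows of $A_{\mathcal A}$ are linearly independent, so that there is a unique $\lambda^*\in\mathbb R^m$ with $Hx^*+f+A^\top\lambda^*=0$ and $0\le\lambda^*\perp b-Ax^*\ge0$; and assume (strict complementarity) $\lambda^*_i>0$ for all $i\in\mathcal A$. Then the DR-DAQP algorithm (described in the context) terminates after finitely many iterations, returning the exact solution $(x^*,\lambda^* )$ (with the returned multiplier understood as $\lambda^*_{\mathcal A}$, the remaining components being zero).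
   Context: Notation: $A_i$, $b_i$ denote the $i$-th row of $A$ and entry of $b$; for an index set $\mathcal S$, $A_{\mathcal S}$, $b_{\mathcal S}$, $\lambda_{\mathcal S}$ denote the corresponding submatrix/subvectors. Fix $\rho>0$, set $H_s=\tfrac12(H+H^\top)$, $\tilde H=\rho I+H_s$, and for $z\in\mathbb R^n$ let $\tilde f(z)=f+(H-\tilde H)z$. For a parameter $z$, let $\mathrm{QP}(z)$ denote the strictly convex quadratic program $\min_x \tfrac12 x^\top\tilde Hx+\tilde f(z)^\top x$ subject to $Ax\le b$; its active set at the minimizer $y$ is $\{i: A_iy=b_i\}$. DR-DAQP algorithm: start from an initial $z_0\in\mathbb R^n$, set $\delta=\infty$, and let $\mathcal A_{-1}$ be undefined (so the test below fails at $k=0$). For $k=0,1,2,\dots$: 1. Let $y_k$ be the solution of $\mathrm{QP}(z_k)$ and $\mathcal A_k$ its active set. 2. If $\mathcal A_k=\mathcal A_{k-1}$: let $(\tilde z_k,\lambda_k)$ solve the linear system $\begin{bmatrix}H & A_{\mathcal A_k}^\top\\ A_{\mathcal A_k} & 0\end{bmatrix}\begin{bmatrix}x\\ \lambda\end{bmatrix}=\begin{bmatrix}-f\\ b_{\mathcal A_k}\end{bmatrix}$. If $\lambda_k\ge0$ and $A\tilde z_k\le b$, stop and return $(\tilde z_k,\lambda_k)$. Otherwise, let $\tilde y_k$ be the solution of $\mathrm{QP}(\tilde z_k)$ and redefine $\mathcal A_k$ as its active set; if $\|\tilde y_k-\tilde z_k\|<\delta$, replace $y_k\leftarrow\tilde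 y_k$, $z_k\leftarrow\tilde z_k$, and set $\delta\leftarrow\|\tilde y_k-\tilde z_k\|$. 3. Set $z_{k+1}=(\rho I+H)^{-1}\big(\rho y_k+Hz_k+\tfrac{1}{2}H_s(y_k-z_k)\big)$. The algorithm iterates indefinitely unless it stops in step 2. *)

theory Defs
  imports "HOL-Analysis.Analysis" "HOL-Library.Extended_Real"
begin

definition feasible :: "real^'n^'m \<Rightarrow> real^'m \<Rightarrow> (real^'n) set" where
  "feasible A b = {x. \<forall>i. (A $ i) \<bullet> x \<le> b $ i}"

definition active_set :: "real^'n^'m \<Rightarrow> real^'m \<Rightarrow> real^'n \<Rightarrow> 'm set" where
  "active_set A b y = {i. (A $ i) \<bullet> y = b $ i}"

definition Hsym :: "real^'n^'n \<Rightarrow> real^'n^'n" where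
  "Hsym H = (1/2) *\<^sub>R (H + transpose H)"

definition Htil :: "real \<Rightarrow> real^'n^'n \<Rightarrow> real^'n^'n" where
  "Htil \<rho> H = \<rho> *\<^sub>R mat 1 + Hsym H"

definition ftil :: "real \<Rightarrow> real^'n^'n \<Rightarrow> real^'n \<Rightarrow> real^'n \<Rightarrow> real^'n" where
  "ftil \<rho> H f z = f + (H - Htil \<rho> H) *v z"

definition qp_obj :: "real \<Rightarrow> real^'n^'n \<Rightarrow> real^'n \<Rightarrow> real^'n \<Rightarrow> real^'n \<Rightarrow> real" where
  "qp_obj \<rho> H f z x = (1/2) * (x \<bullet> (Htil \<rho> H *v x)) + ftil \<rho> H f z \<bullet> x"

definition qp_sol :: "real \<Rightarrow> real^'n^'n \<Rightarrow> real^'n \<Rightarrow> real^'n^'m \<Rightarrow> real^'m \<Rightarrow> real^'n \<Rightarrow> real^'n" where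
  "qp_sol \<rho> H f A b z =
     (THE y. y \<in> feasible A b \<and> (\<forall>x\<in>feasible A b. qp_obj \<rho> H f z y \<le> qp_obj \<rho> H f z x))"

text \<open>(x, lam) solves the equality-constrained KKT system for index set S:
  [H A_S^T; A_S 0] [x; lam_S] = [-f; b_S], with lam represented as a vector in R^m
  whose components outside S are zero.\<close>
definition kkt_sol :: "real^'n^'n \<Rightarrow> real^'n \<Rightarrow> real^'n^'m \<Rightarrow> real^'m \<Rightarrow> 'm set
    \<Rightarrow> (real^'n) \<times> (real^'m) \<Rightarrow> bool" where
  "kkt_sol H f A b S p \<longleftrightarrow>
     (let x = fst p; lam = snd p in
       (\<forall>i. i \<notin> S \<longrightarrow> lam $ i = 0) \<and>
       H *v x + transpose A *v lam = - f \<and>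
       (\<forall>i\<in>S. (A $ i) \<bullet> x = b $ i))"

text \<open>Algorithm state: (z_k, A_{k-1} (None = undefined), delta).\<close>
type_synonym ('n, 'm) dr_state = "(real^'n) \<times> 'm set option \<times> ereal"

text \<open>The parameter sel k S gives the solution of the linear
  system chosen at iteration k for active set S. Result: Inl (x, lam) = stop and return;
  Inr s = continue with state s.\<close>
definition dr_step :: "real \<Rightarrow> real^'n^'n \<Rightarrow> real^'n \<Rightarrow> real^'n^'m \<Rightarrow> real^'m
    \<Rightarrow> (nat \<Rightarrow> 'm set \<Rightarrow> (real^'n) \<times> (real^'m)) \<Rightarrow> nat \<Rightarrow> ('n, 'm) dr_state
    \<Rightarrow> ((real^'n) \<times> (real^'m)) + ('n, 'm) dr_state" where
  "dr_step \<rho> H f A b sel k s =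
    (let (z, prevA, \<delta>) = s;
         y = qp_sol \<rho> H f A b z;
         Ak = active_set A b y;
         z3 = (\<lambda>y z. matrix_inv (\<rho> *\<^sub>R mat 1 + H) *v
                 (\<rho> *\<^sub>R y + H *v z + (1/2) *\<^sub>R (Hsym H *v (y - z))))
     in if prevA = Some Ak then
          (let (zt, lam) = sel k Ak in
           if (\<forall>i. lam $ i \<ge> 0) \<and> zt \<in> feasible A b then Inl (zt, lam)
           else
             (let yt = qp_sol \<rho> H f A b zt;
                  Ak' = active_set A b yt
              in if ereal (norm (yt - zt)) < \<delta>
                 then Inr (z3 yt zt, Some Ak', ereal (norm (yt - zt)))
                 else Inr (z3 y z, Some Ak', \<delta>)))
        else Inr (z3 y z, Some Ak, \<delta>))"

text \<open>Run of the algorithm: status before iteration k.\<close>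
fun dr_run :: "real \<Rightarrow> real^'n^'n \<Rightarrow> real^'n \<Rightarrow> real^'n^'m \<Rightarrow> real^'m
    \<Rightarrow> (nat \<Rightarrow> 'm set \<Rightarrow> (real^'n) \<times> (real^'m)) \<Rightarrow> real^'n \<Rightarrow> nat
    \<Rightarrow> ((real^'n) \<times> (real^'m)) + ('n, 'm) dr_state" where
  "dr_run \<rho> H f A b sel z0 0 = Inr (z0, None, \<infinity>)"
| "dr_run \<rho> H f A b sel z0 (Suc k) =
     (case dr_run \<rho> H f A b sel z0 k of
        Inl r \<Rightarrow> Inl r
      | Inr s \<Rightarrow> dr_step \<rho> H f A b sel k s)"

end

theory Submission
  imports Defs
begin

lemma minv: fixes M :: "real^'n^'n" assumes "invertible M"
  shows "M ** matrix_inv M = mat 1" "matrix_inv M ** M = mat 1"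
proof -
  have "\<exists>A'. M ** A' = mat 1 \<and> A' ** M = mat 1" using assms unfolding invertible_def by blast
  then have "M ** matrix_inv M = mat 1 \<and> matrix_inv M ** M = mat 1"
    unfolding matrix_inv_def by (rule someI_ex)
  then show "M ** matrix_inv M = mat 1" "matrix_inv M ** M = mat 1" by auto
qed

lemma minv_vec: fixes M :: "real^'n^'n" assumes "invertible M"
  shows "M *v (matrix_inv M *v v) = v" "matrix_inv M *v (M *v v) = v"
  using minv[OF assms] by (simp_all add: matrix_vector_mul_assoc)

lemma pd_invertible: fixes M :: "real^'n^'n"
  assumes "\<And>x. x \<noteq> 0 \<Longrightarrow> x \<bullet> (M *v x) > 0"
  shows "invertible M"
proof -
  have "inj ((*v) M)"
  proof (rule injI)
    fix x y assume "M *v x = M *v y"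
    then have "M *v (x - y) = 0" by (simp add: matrix_vector_mult_diff_distrib)
    then show "x = y" using assms[of "x - y"] by (cases "x - y = 0") auto
  qed
  then show ?thesis using matrix_left_invertible_injective invertible_left_inverse by blast
qed

lemma inner_mv_transpose: fixes M :: "real^'n^'n"
  shows "(M *v x) \<bullet> y = x \<bullet> (transpose M *v y)"
  by (metis dot_lmul_matrix inner_commute transpose_matrix_vector)

lemma inner_transpose_quad: fixes M :: "real^'n^'n"
  shows "x \<bullet> (transpose M *v x) = x \<bullet> (M *v x)"
  by (metis inner_mv_transpose inner_commute)

lemma Hsym_transpose: "transpose (Hsym H) = Hsym H"
  unfolding Hsym_def by (simp add: transpose_scalar transpose_def vec_eq_iff add.commute)

lemma Hsym_mv: "Hsym H *v x = (1/2) *\<^sub>R (H *v x + transpose H *v x)"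
  unfolding Hsym_def by (metis matrix_vector_mult_add_rdistrib scaleR_matrix_vector_assoc)

lemma Hsym_quad: "x \<bullet> (Hsym H *v x) = x \<bullet> (H *v x)"
  by (simp add: Hsym_mv inner_add_right inner_transpose_quad del: transpose_matrix_vector)

lemma Htil_mv: "Htil \<rho> H *v x = \<rho> *\<^sub>R x + Hsym H *v x"
  unfolding Htil_def by (metis matrix_vector_mul_lid matrix_vector_mult_add_rdistrib scaleR_matrix_vector_assoc)

lemma sym_inner: fixes M :: "real^'n^'n" assumes "transpose M = M"
  shows "(M *v x) \<bullet> y = x \<bullet> (M *v y)"
  using inner_mv_transpose[of M x y] assms by simp

lemma transpose_add': "transpose (A + B) = transpose A + transpose (B::real^'n^'n)"
  by (simp add: transpose_def vec_eq_iff)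

lemma Htil_transpose: "transpose (Htil \<rho> H) = Htil \<rho> H"
  unfolding Htil_def by (simp add: transpose_add' transpose_scalar Hsym_transpose)

lemma pd_uniform: fixes H :: "real^'n^'n"
  assumes pd: "\<forall>x. x \<noteq> 0 \<longrightarrow> x \<bullet> ((H + transpose H) *v x) > 0"
  shows "\<exists>\<mu>>0. \<forall>x. x \<bullet> (H *v x) \<ge> \<mu> * (norm x)^2"
proof -
  have q: "x \<bullet> ((H + transpose H) *v x) = 2 * (x \<bullet> (H *v x))" for x
    by (simp add: matrix_vector_mult_add_rdistrib inner_add_right inner_transpose_quad del: transpose_matrix_vector)
  have cont: "continuous_on (sphere 0 1) (\<lambda>x::real^'n. x \<bullet> (H *v x))"
    by (intro continuous_intros continuous_on_compose2[OF linear_continuous_on] ) (auto intro: bounded_linear.continuous_on)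
  obtain u :: "real^'n" where "norm u = 1" using vector_choose_size[of 1] by auto
  then have ne: "sphere (0::real^'n) 1 \<noteq> {}" by auto
  obtain x0 where x0: "x0 \<in> sphere 0 1" and min: "\<And>x. x \<in> sphere 0 1 \<Longrightarrow> x0 \<bullet> (H *v x0) \<le> x \<bullet> (H *v x)"
    using continuous_attains_inf[OF compact_sphere ne cont] by blast
  have "x0 \<noteq> 0" using x0 by auto
  then have pos: "x0 \<bullet> (H *v x0) > 0" using pd[rule_format, of x0] q by auto
  show ?thesis
  proof (intro exI[of _ "x0 \<bullet> (H *v x0)"] conjI allI pos)
    fix x :: "real^'n"
    show "x0 \<bullet> (H *v x0) * (norm x)^2 \<le> x \<bullet> (H *v x)"
    proof (cases "x = 0")
      case True then show ?thesis by simp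
    next
      case False
      let ?u = "(1/norm x) *\<^sub>R x"
      have "?u \<in> sphere 0 1" using False by simp
      then have "x0 \<bullet> (H *v x0) \<le> ?u \<bullet> (H *v ?u)" by (rule min)
      also have "?u \<bullet> (H *v ?u) = (x \<bullet> (H *v x)) / (norm x)^2"
        by (simp add: matrix_vector_mult_scaleR power2_eq_square)
      finally show ?thesis using False by (simp add: field_simps)
    qed
  qed
qed

definition qf :: "real^'n^'n \<Rightarrow> real^'n \<Rightarrow> real^'n \<Rightarrow> real" where
  "qf Q c x = (1/2) * (x \<bullet> (Q *v x)) + c \<bullet> x"

lemma qp_obj_qf: "qp_obj \<rho> H f z = qf (Htil \<rho> H) (ftil \<rho> H f z)"
  by (simp add: fun_eq_iff qp_obj_def qf_def)

lemma qf_expand: fixes Q :: "real^'n^'n" assumes "transpose Q = Q"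
  shows "qf Q c (y + t *\<^sub>R d) = qf Q c y + t * ((Q *v y + c) \<bullet> d) + t^2/2 * (d \<bullet> (Q *v d))"
proof -
  have s: "y \<bullet> (Q *v d) = (Q *v y) \<bullet> d" using sym_inner[OF assms, of y d] by simp
  show ?thesis
    unfolding qf_def
    by (simp add: matrix_vector_right_distrib matrix_vector_mult_scaleR inner_add_left inner_add_right s
         algebra_simps power2_eq_square inner_commute[of d "Q *v y"])
qed

lemma closed_feasible: "closed (feasible A b)"
proof -
  have "feasible A b = (\<Inter>i. {x. (A $ i) \<bullet> x \<le> b $ i})" unfolding feasible_def by auto
  then show ?thesis by (simp add: closed_INT closed_halfspace_le)
qed

lemma convex_feasible: "convex (feasible A b)"
proof -
  have "feasible A b = (\<Inter>i. {x. (A $ i) \<bullet> x \<le> b $ i})" unfolding feasible_def by auto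
  then show ?thesis by (simp add: convex_INT convex_halfspace_le)
qed

lemma min_vi: fixes Q :: "real^'n^'n"
  assumes sym: "transpose Q = Q" and psd: "\<And>d. d \<bullet> (Q *v d) \<ge> 0"
    and cx: "convex X" and y: "y \<in> X" and mn: "\<And>x. x \<in> X \<Longrightarrow> qf Q c y \<le> qf Q c x"
    and x: "x \<in> X"
  shows "(Q *v y + c) \<bullet> (x - y) \<ge> 0"
proof (rule ccontr)
  let ?d = "x - y"
  let ?g = "(Q *v y + c) \<bullet> ?d" and ?q = "?d \<bullet> (Q *v ?d)"
  assume "\<not> ?thesis"
  then have g: "?g < 0" by simp
  have q: "?q \<ge> 0" by (rule psd)
  define t where "t = min 1 (- ?g / (?q + 1))"
  have "?g / (?q+1) < 0" using g q by (intro divide_neg_pos) auto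
  then have t0: "t > 0" by (simp add: t_def)
  have t1: "t \<le> 1" by (simp add: t_def)
  have "t \<le> - ?g / (?q + 1)" by (simp add: t_def)
  then have "t * ?q \<le> (- ?g / (?q + 1)) * ?q" by (rule mult_right_mono[OF _ q])
  also have "\<dots> < - ?g" using g q by (simp add: field_simps)
  finally have tq: "t * ?q < - ?g" .
  have "y + t *\<^sub>R ?d = (1 - t) *\<^sub>R y + t *\<^sub>R x" by (simp add: algebra_simps)
  also have "\<dots> \<in> X" using cx y x t0 t1 by (simp add: convex_def)
  finally have "qf Q c y \<le> qf Q c (y + t *\<^sub>R ?d)" by (rule mn)
  also have "\<dots> = qf Q c y + t * ?g + t^2/2 * ?q" by (rule qf_expand[OF sym])
  also have "\<dots> = qf Q c y + t * (?g + t/2 * ?q)" by (simp add: power2_eq_square algebra_simps)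
  finally have "0 \<le> t * (?g + t/2 * ?q)" by simp
  then have "0 \<le> ?g + t/2 * ?q" using t0 by (simp add: zero_le_mult_iff)
  then show False using tq g q t0 by (simp add: field_simps)
qed

lemma qf_min_exists: fixes Q :: "real^'n^'n"
  assumes pd: "\<And>d. d \<bullet> (Q *v d) \<ge> r * (norm d)^2" and r: "r > 0"
    and X: "closed X" "X \<noteq> {}"
  shows "\<exists>y\<in>X. \<forall>x\<in>X. qf Q c y \<le> qf Q c x"
proof -
  obtain x0 where x0: "x0 \<in> X" using X by auto
  define Rad where "Rad = max (norm x0) (max 1 ((2/r) * (norm c + \<bar>qf Q c x0\<bar> + 1)))"
  have far: "qf Q c x > qf Q c x0" if "norm x > Rad" for x
  proof -
    have n1: "norm x \<ge> 1" and n2: "norm x > (2/r) * (norm c + \<bar>qf Q c x0\<bar> + 1)"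
      using that by (auto simp: Rad_def)
    have "r/2 * norm x > norm c + \<bar>qf Q c x0\<bar> + 1" using n2 r by (simp add: field_simps)
    have "c \<bullet> x \<ge> - (norm c * norm x)" using Cauchy_Schwarz_ineq2[of c x] by linarith
    moreover have "x \<bullet> (Q *v x) \<ge> r * (norm x)^2" by (rule pd)
    ultimately have "qf Q c x \<ge> norm x * (r/2 * norm x - norm c)"
      unfolding qf_def by (simp add: power2_eq_square algebra_simps)
    also have "norm x * (r/2 * norm x - norm c) \<ge> 1 * (\<bar>qf Q c x0\<bar> + 1)"
      using n1 \<open>r/2 * norm x > _\<close> by (intro mult_mono) auto
    finally show ?thesis using abs_ge_self[of "qf Q c x0"] by (smt (verit))
  qed
  let ?K = "X \<inter> cball 0 Rad"
  have K: "compact ?K" using X by (simp add: closed_Int_compact compact_cball)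
  have Kne: "?K \<noteq> {}" using x0 by (auto simp: Rad_def)
  have cont: "continuous_on ?K (qf Q c)"
    unfolding qf_def by (intro continuous_intros continuous_on_compose2[OF linear_continuous_on]) (auto intro: bounded_linear.continuous_on)
  obtain y where y: "y \<in> ?K" and mn: "\<And>x. x \<in> ?K \<Longrightarrow> qf Q c y \<le> qf Q c x"
    using continuous_attains_inf[OF K Kne cont] by blast
  have "qf Q c y \<le> qf Q c x" if "x \<in> X" for x
  proof (cases "norm x \<le> Rad")
    case True then show ?thesis using that mn by auto
  next
    case False
    have "qf Q c y \<le> qf Q c x0" using mn x0 by (auto simp: Rad_def)
    then show ?thesis using far[of x] False by auto
  qed
  then show ?thesis using y by auto
qed

lemma vi_unique: fixes Q :: "real^'n^'n"
  assumes pd: "\<And>d. d \<noteq> 0 \<Longrightarrow> d \<bullet> (Q *v d) > 0"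
    and y1: "y1 \<in> X" "\<forall>x\<in>X. (Q *v y1 + c) \<bullet> (x - y1) \<ge> 0"
    and y2: "y2 \<in> X" "\<forall>x\<in>X. (Q *v y2 + c) \<bullet> (x - y2) \<ge> 0"
  shows "y1 = y2"
proof (rule ccontr)
  assume ne: "y1 \<noteq> y2"
  have a: "(Q *v y1 + c) \<bullet> (y2 - y1) \<ge> 0" using y1 y2 by auto
  have b: "(Q *v y2 + c) \<bullet> (y1 - y2) \<ge> 0" using y1 y2 by auto
  have "(Q *v y1 + c) \<bullet> (y2 - y1) + (Q *v y2 + c) \<bullet> (y1 - y2) = - ((y1 - y2) \<bullet> (Q *v (y1 - y2)))"
    by (simp add: matrix_vector_mult_diff_distrib inner_diff_left inner_diff_right inner_add_left inner_commute algebra_simps)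
  moreover have "(y1 - y2) \<bullet> (Q *v (y1 - y2)) > 0" using pd ne by simp
  ultimately show False using a b by linarith
qed

lemma qp_sol_vi:
  assumes pd: "\<forall>x. x \<noteq> 0 \<longrightarrow> x \<bullet> ((H + transpose H) *v x) > 0" and rho: "\<rho> > 0"
    and ne: "feasible A b \<noteq> {}"
  shows "qp_sol \<rho> H f A b z \<in> feasible A b \<and>
     (\<forall>x\<in>feasible A b. (Htil \<rho> H *v qp_sol \<rho> H f A b z + ftil \<rho> H f z) \<bullet> (x - qp_sol \<rho> H f A b z) \<ge> 0)"
proof -
  let ?Q = "Htil \<rho> H" and ?c = "ftil \<rho> H f z" and ?X = "feasible A b"
  obtain \<mu> where mu: "\<mu> > 0" "\<And>x. x \<bullet> (H *v x) \<ge> \<mu> * (norm x)^2" using pd_uniform[OF pd] by blast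
  have Qq: "d \<bullet> (?Q *v d) = \<rho> * (norm d)^2 + d \<bullet> (H *v d)" for d
    by (simp add: Htil_mv inner_add_right Hsym_quad power2_norm_eq_inner)
  have Qr: "d \<bullet> (?Q *v d) \<ge> \<rho> * (norm d)^2" for d using Qq[of d] mu(2)[of d] mu(1)
    by (smt (verit) mult_nonneg_nonneg zero_le_power2)
  have Qpos: "d \<bullet> (?Q *v d) > 0" if "d \<noteq> 0" for d using Qr[of d] that rho by (smt (verit) mult_pos_pos zero_less_norm_iff zero_less_power)
  have Qpsd: "d \<bullet> (?Q *v d) \<ge> 0" for d using Qr[of d] rho by (smt (verit) mult_nonneg_nonneg zero_le_power2)
  let ?P = "\<lambda>y. y \<in> ?X \<and> (\<forall>x\<in>?X. qp_obj \<rho> H f z y \<le> qp_obj \<rho> H f z x)"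
  have ex: "\<exists>y. ?P y" using qf_min_exists[where Q="?Q" and r="\<rho>" and X="?X" and c="?c", OF Qr rho closed_feasible ne]
    by (auto simp: qp_obj_qf)
  have vi: "\<forall>x\<in>?X. (?Q *v y + ?c) \<bullet> (x - y) \<ge> 0" if "?P y" for y
    using that min_vi[OF Htil_transpose Qpsd convex_feasible, where y=y and c="?c"] by (auto simp: qp_obj_qf)
  have "\<exists>!y. ?P y"
  proof (rule ex_ex1I[OF ex])
    fix y1 y2 assume "?P y1" "?P y2"
    then show "y1 = y2" using vi_unique[OF Qpos, where X="?X" and c="?c"] vi by blast
  qed
  then have "?P (qp_sol \<rho> H f A b z)" unfolding qp_sol_def by (rule theI')
  then show ?thesis using vi by blast
qed

declare transpose_matrix_vector[simp del]

lemma AT_sum: fixes A :: "real^'n^'m"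
  shows "transpose A *v l = (\<Sum>i\<in>UNIV. (l $ i) *\<^sub>R (A $ i))"
  by (simp add: vec_eq_iff vector_matrix_mult_def mult.commute transpose_matrix_vector)

lemma AT_inner: fixes A :: "real^'n^'m"
  shows "(transpose A *v l) \<bullet> d = (\<Sum>i\<in>UNIV. l $ i * ((A $ i) \<bullet> d))"
  by (simp only: AT_sum inner_sum_left inner_scaleR_left)

lemma AT_sum_S: fixes A :: "real^'n^'m"
  assumes "\<forall>i. i \<notin> S \<longrightarrow> l $ i = 0"
  shows "transpose A *v l = (\<Sum>i\<in>S. (l $ i) *\<^sub>R (A $ i))"
  unfolding AT_sum using assms by (intro sum.mono_neutral_right) auto

lemma AT_inner_S: fixes A :: "real^'n^'m"
  assumes "\<forall>i. i \<notin> S \<longrightarrow> l $ i = 0"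
  shows "(transpose A *v l) \<bullet> d = (\<Sum>i\<in>S. l $ i * ((A $ i) \<bullet> d))"
  unfolding AT_sum_S[OF assms] by (simp add: inner_sum_left)

lemma kkt_sol_iff: "kkt_sol H f A b S (x, l) \<longleftrightarrow>
   (\<forall>i. i \<notin> S \<longrightarrow> l $ i = 0) \<and> H *v x + transpose A *v l = - f \<and> (\<forall>i\<in>S. (A $ i) \<bullet> x = b $ i)"
  by (simp add: kkt_sol_def Let_def del: transpose_matrix_vector)

lemma kkt_x_unique: fixes H :: "real^'n^'n"
  assumes pd: "\<And>x. x \<noteq> 0 \<Longrightarrow> x \<bullet> (H *v x) > 0"
    and k1: "kkt_sol H f A b S (x1, l1)" and k2: "kkt_sol H f A b S (x2, l2)"
  shows "x1 = x2"
proof (rule ccontr)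
  assume ne: "x1 \<noteq> x2"
  let ?d = "x1 - x2" and ?l = "l1 - l2"
  have s: "\<forall>i. i \<notin> S \<longrightarrow> ?l $ i = 0" using k1 k2 by (simp add: kkt_sol_iff)
  have "H *v ?d + transpose A *v ?l = (H *v x1 + transpose A *v l1) - (H *v x2 + transpose A *v l2)"
    by (simp add: matrix_vector_mult_diff_distrib algebra_simps del: transpose_matrix_vector)
  also have "\<dots> = 0" using k1 k2 by (simp add: kkt_sol_iff del: transpose_matrix_vector)
  finally have e: "H *v ?d + transpose A *v ?l = 0" .
  have a: "\<forall>i\<in>S. (A $ i) \<bullet> ?d = 0" using k1 k2 by (simp add: kkt_sol_iff inner_diff_right)
  have "(transpose A *v ?l) \<bullet> ?d = 0" unfolding AT_inner_S[OF s] using a by simp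
  moreover have "H *v ?d = - (transpose A *v ?l)" using e by (simp add: eq_neg_iff_add_eq_0)
  ultimately have "?d \<bullet> (H *v ?d) = 0" by (simp add: inner_commute)
  then show False using pd[of ?d] ne by simp
qed

lemma kkt_correct: fixes H :: "real^'n^'n"
  assumes pd: "\<And>x. x \<noteq> 0 \<Longrightarrow> x \<bullet> (H *v x) > 0"
    and avi: "xstar \<in> feasible A b" "\<forall>y\<in>feasible A b. (H *v xstar + f) \<bullet> (y - xstar) \<ge> 0"
    and licq: "\<forall>c. (\<Sum>i\<in>active_set A b xstar. c i *\<^sub>R (A $ i)) = 0
                  \<longrightarrow> (\<forall>i\<in>active_set A b xstar. c i = 0)"
    and kkt: "H *v xstar + f + transpose A *v lamstar = 0"
        "\<forall>i. lamstar $ i * (b $ i - (A $ i) \<bullet> xstar) = 0"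
    and ks: "kkt_sol H f A b S (zt, lam)" and lp: "\<forall>i. lam $ i \<ge> 0" and zf: "zt \<in> feasible A b"
  shows "zt = xstar \<and> lam = lamstar"
proof -
  have s: "\<forall>i. i \<notin> S \<longrightarrow> lam $ i = 0" and eq: "H *v zt + transpose A *v lam = - f"
    and act: "\<forall>i\<in>S. (A $ i) \<bullet> zt = b $ i" using ks by (auto simp: kkt_sol_iff simp del: transpose_matrix_vector)
  have vi: "(H *v zt + f) \<bullet> (y - zt) \<ge> 0" if "y \<in> feasible A b" for y
  proof -
    have "H *v zt + f = (H *v zt + transpose A *v lam) + f - transpose A *v lam" by simp
    also have "\<dots> = - (transpose A *v lam)" using eq by simp
    finally have "H *v zt + f = - (transpose A *v lam)" .
    then have "(H *v zt + f) \<bullet> (y - zt) = - (\<Sum>i\<in>S. lam $ i * ((A $ i) \<bullet> (y - zt)))"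
      using AT_inner_S[OF s] by simp
    also have "\<dots> \<ge> 0"
    proof -
      have "lam $ i * ((A $ i) \<bullet> (y - zt)) \<le> 0" if "i \<in> S" for i
      proof -
        have "(A $ i) \<bullet> y \<le> b $ i" using \<open>y \<in> feasible A b\<close> by (simp add: feasible_def)
        then have "(A $ i) \<bullet> (y - zt) \<le> 0" using act that by (simp add: inner_diff_right)
        then show ?thesis using lp by (simp add: mult_nonneg_nonpos)
      qed
      then show ?thesis by (simp add: sum_nonpos)
    qed
    finally show ?thesis .
  qed
  have zx: "zt = xstar"
  proof (rule ccontr)
    assume ne: "zt \<noteq> xstar"
    have a: "(H *v zt + f) \<bullet> (xstar - zt) \<ge> 0" using vi avi(1) by blast
    have b: "(H *v xstar + f) \<bullet> (zt - xstar) \<ge> 0" using avi(2) zf by blast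
    have "(H *v zt + f) \<bullet> (xstar - zt) + (H *v xstar + f) \<bullet> (zt - xstar) = - ((zt - xstar) \<bullet> (H *v (zt - xstar)))"
      by (simp add: matrix_vector_mult_diff_distrib inner_diff_left inner_diff_right inner_add_left inner_commute algebra_simps)
    moreover have "(zt - xstar) \<bullet> (H *v (zt - xstar)) > 0" using pd ne by simp
    ultimately show False using a b by linarith
  qed
  let ?Ast = "active_set A b xstar"
  have ls0: "\<forall>i. i \<notin> ?Ast \<longrightarrow> lamstar $ i = 0" using kkt(2) by (auto simp: active_set_def)
  have l0: "\<forall>i. i \<notin> ?Ast \<longrightarrow> lam $ i = 0" using s act zx by (auto simp: active_set_def)
  have d0: "\<forall>i. i \<notin> ?Ast \<longrightarrow> (lam - lamstar) $ i = 0" using ls0 l0 by simp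
  have "transpose A *v (lam - lamstar) = (H *v zt + transpose A *v lam) - (H *v xstar + f + transpose A *v lamstar) + f"
    using zx by (simp add: matrix_vector_mult_diff_distrib del: transpose_matrix_vector)
  also have "\<dots> = 0" using eq kkt(1) by simp
  finally have "transpose A *v (lam - lamstar) = 0" .
  then have "(\<Sum>i\<in>?Ast. ((lam - lamstar) $ i) *\<^sub>R (A $ i)) = 0" using AT_sum_S[OF d0, where A=A] by simp
  then have "\<forall>i\<in>?Ast. (lam - lamstar) $ i = 0" using licq by blast
  then have "lam = lamstar" using d0 unfolding vec_eq_iff by (metis vector_minus_component eq_iff_diff_eq_0)
  then show ?thesis using zx by simp
qed

lemma kkt_surj: fixes M :: "real^'n^'n" and A :: "real^'n^'m"
  assumes pd: "\<And>x. x \<noteq> 0 \<Longrightarrow> x \<bullet> (M *v x) > 0"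
    and ind: "\<forall>c. (\<Sum>i\<in>S. c i *\<^sub>R (A $ i)) = 0 \<longrightarrow> (\<forall>i\<in>S. c i = 0)"
  shows "\<exists>x l. (\<forall>i. i \<notin> S \<longrightarrow> l $ i = 0) \<and> M *v x + transpose A *v l = g \<and> (\<forall>i\<in>S. (A $ i) \<bullet> x = r $ i)"
proof -
  define P :: "real^'m \<Rightarrow> real^'m" where "P l = (\<chi> i. if i \<in> S then l $ i else 0)" for l
  define \<Phi> :: "(real^'n) \<times> (real^'m) \<Rightarrow> (real^'n) \<times> (real^'m)" where
    "\<Phi> = (\<lambda>(x, l). (M *v x + transpose A *v P l, (\<chi> i. if i \<in> S then (A $ i) \<bullet> x else l $ i)))"
  have Padd: "P (a + c) = P a + P c" for a c by (simp add: P_def vec_eq_iff)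
  have Pscale: "P (t *\<^sub>R a) = t *\<^sub>R P a" for t a by (simp add: P_def vec_eq_iff)
  have lin: "linear \<Phi>"
  proof (rule linearI)
    fix p q :: "(real^'n) \<times> (real^'m)"
    show "\<Phi> (p + q) = \<Phi> p + \<Phi> q"
      by (cases p, cases q) (simp add: \<Phi>_def Padd matrix_vector_right_distrib vec_eq_iff inner_add_right)
  next
    fix t :: real and p :: "(real^'n) \<times> (real^'m)"
    show "\<Phi> (t *\<^sub>R p) = t *\<^sub>R \<Phi> p"
      by (cases p) (simp add: \<Phi>_def Pscale matrix_vector_mult_scaleR vec_eq_iff distrib_left)
  qed
  have ker: "p = 0" if "\<Phi> p = 0" for p
  proof -
    obtain x l where p: "p = (x, l)" by (cases p)
    have e1: "M *v x + transpose A *v P l = 0" using that by (simp add: \<Phi>_def p zero_prod_def)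
    have e2': "(\<chi> i. if i \<in> S then (A $ i) \<bullet> x else l $ i) = 0" using that by (simp add: \<Phi>_def p zero_prod_def)
    have e2: "(if i \<in> S then (A $ i) \<bullet> x else l $ i) = 0" for i using arg_cong[OF e2', of "\<lambda>v. v $ i"] by simp
    have lS: "\<forall>i. i \<notin> S \<longrightarrow> l $ i = 0"
    proof (intro allI impI)
      fix i assume "i \<notin> S" then show "l $ i = 0" using e2[of i] by simp
    qed
    have aS: "\<forall>i\<in>S. (A $ i) \<bullet> x = 0"
    proof
      fix i assume "i \<in> S" then show "(A $ i) \<bullet> x = 0" using e2[of i] by simp
    qed
    have Pl: "P l = l" using lS by (simp add: P_def vec_eq_iff)
    have "(transpose A *v l) \<bullet> x = 0" unfolding AT_inner_S[OF lS] using aS by simp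
    moreover have "M *v x = - (transpose A *v l)" using e1 Pl by (simp add: eq_neg_iff_add_eq_0)
    ultimately have "x \<bullet> (M *v x) = 0" by (simp add: inner_commute)
    then have x0: "x = 0" using pd[of x] by (cases "x = 0") auto
    then have "transpose A *v l = 0" using e1 Pl by simp
    then have "(\<Sum>i\<in>S. (l $ i) *\<^sub>R (A $ i)) = 0" using AT_sum_S[OF lS, where A=A] by simp
    then have "\<forall>i\<in>S. l $ i = 0" using ind by blast
    then have "l = 0" using lS by (metis vec_eq_iff zero_index)
    then show ?thesis using x0 p by (simp add: zero_prod_def)
  qed
  have "inj \<Phi>"
  proof (rule injI)
    fix p q assume "\<Phi> p = \<Phi> q"
    then have "\<Phi> (p - q) = 0" using linear_diff[OF lin] by simp
    then have "p - q = 0" by (rule ker)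
    then show "p = q" by simp
  qed
  then have "surj \<Phi>" using linear_injective_imp_surjective[OF lin] by simp
  then obtain p where "\<Phi> p = (g, r)" by (metis surjD)
  obtain x l where p: "p = (x, l)" by (cases p)
  have e1: "M *v x + transpose A *v P l = g" using \<open>\<Phi> p = (g, r)\<close> by (simp add: \<Phi>_def p)
  have e2: "(\<chi> i. if i \<in> S then (A $ i) \<bullet> x else l $ i) = r" using \<open>\<Phi> p = (g, r)\<close> by (simp add: \<Phi>_def p)
  show ?thesis
  proof (intro exI conjI)
    show "\<forall>i. i \<notin> S \<longrightarrow> P l $ i = 0" by (simp add: P_def)
    show "M *v x + transpose A *v P l = g" by (rule e1)
    show "\<forall>i\<in>S. (A $ i) \<bullet> x = r $ i"
    proof
      fix i assume "i \<in> S" then show "(A $ i) \<bullet> x = r $ i" using arg_cong[OF e2, of "\<lambda>v. v $ i"] by simp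
    qed
  qed
qed

lemma kkt_exists: fixes H :: "real^'n^'n" and A :: "real^'n^'m"
  assumes pd: "\<And>x. x \<noteq> 0 \<Longrightarrow> x \<bullet> (H *v x) > 0"
    and y: "\<forall>i\<in>S. (A $ i) \<bullet> y = b $ i"
  shows "\<exists>p. kkt_sol H f A b S p"
proof -
  let ?V = "(\<lambda>i. A $ i) ` S"
  obtain B where B: "B \<subseteq> ?V" "independent B" "?V \<subseteq> span B" by (rule maximal_independent_subset[of ?V])
  have "finite ?V" by simp
  then have finB: "finite B" using B(1) by (rule rev_finite_subset)
  define pick where "pick v = (SOME j. j \<in> S \<and> A $ j = v)" for v
  have pick: "pick v \<in> S \<and> A $ pick v = v" if "v \<in> B" for v
  proof -
    have "\<exists>j. j \<in> S \<and> A $ j = v" using that B(1) by auto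
    then show ?thesis unfolding pick_def by (rule someI_ex)
  qed
  define S' where "S' = pick ` B"
  have S'S: "S' \<subseteq> S" using pick by (auto simp: S'_def)
  have inj: "inj_on pick B"
  proof (rule inj_onI)
    fix v w assume v: "v \<in> B" and w: "w \<in> B" and e: "pick v = pick w"
    have "v = A $ pick v" using pick[OF v] by simp
    also have "\<dots> = A $ pick w" using e by simp
    also have "\<dots> = w" using pick[OF w] by simp
    finally show "v = w" .
  qed
  have ind': "\<forall>c. (\<Sum>i\<in>S'. c i *\<^sub>R (A $ i)) = 0 \<longrightarrow> (\<forall>i\<in>S'. c i = 0)"
  proof (intro allI impI ballI)
    fix c i assume z: "(\<Sum>i\<in>S'. c i *\<^sub>R (A $ i)) = 0" and i: "i \<in> S'"
    have "(\<Sum>i\<in>S'. c i *\<^sub>R (A $ i)) = (\<Sum>v\<in>B. c (pick v) *\<^sub>R (A $ pick v))"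
      unfolding S'_def by (rule sum.reindex[OF inj, unfolded comp_def])
    also have "\<dots> = (\<Sum>v\<in>B. c (pick v) *\<^sub>R v)" using pick by (intro sum.cong) auto
    finally have "(\<Sum>v\<in>B. c (pick v) *\<^sub>R v) = 0" using z by simp
    note sum0 = this
    have "\<forall>v\<in>B. c (pick v) = 0"
    proof (rule ccontr)
      assume "\<not> (\<forall>v\<in>B. c (pick v) = 0)"
      then have "\<exists>u. (\<exists>v\<in>B. u v \<noteq> 0) \<and> (\<Sum>v\<in>B. u v *\<^sub>R v) = 0"
        using sum0 by (intro exI[of _ "\<lambda>v. c (pick v)"]) simp
      then have "dependent B" using dependent_finite[OF finB] by simp
      then show False using B(2) by simp
    qed
    then show "c i = 0" using i by (auto simp: S'_def)
  qed
  obtain x l where xl: "\<forall>i. i \<notin> S' \<longrightarrow> l $ i = 0" "H *v x + transpose A *v l = - f"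
      "\<forall>i\<in>S'. (A $ i) \<bullet> x = b $ i"
    using kkt_surj[OF pd ind', where g="- f" and r=b] by blast
  have orthB: "v \<bullet> (x - y) = 0" if "v \<in> B" for v
  proof -
    have "pick v \<in> S'" using that by (simp add: S'_def)
    then have "(A $ pick v) \<bullet> x = b $ pick v" "(A $ pick v) \<bullet> y = b $ pick v" using xl(3) y S'S by auto
    then show ?thesis using pick[OF that] by (simp add: inner_diff_right)
  qed
  have "(A $ i) \<bullet> x = b $ i" if "i \<in> S" for i
  proof -
    have "A $ i \<in> span B" using B(3) that by auto
    then obtain u where u: "A $ i = (\<Sum>v\<in>B. u v *\<^sub>R v)" using span_finite[OF finB] by auto
    have "(A $ i) \<bullet> (x - y) = 0" unfolding u by (simp add: inner_sum_left orthB)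
    then show ?thesis using y that by (simp add: inner_diff_right)
  qed
  moreover have "\<forall>i. i \<notin> S \<longrightarrow> l $ i = 0" using xl(1) S'S by auto
  ultimately have "kkt_sol H f A b S (x, l)" using xl(2) by (simp add: kkt_sol_iff)
  then show ?thesis by blast
qed

lemma direction: fixes A :: "real^'n^'m"
  assumes ind: "\<forall>c. (\<Sum>i\<in>S. c i *\<^sub>R (A $ i)) = 0 \<longrightarrow> (\<forall>i\<in>S. c i = 0)" and i0: "i0 \<in> S"
  shows "\<exists>d. (A $ i0) \<bullet> d = 1 \<and> (\<forall>j\<in>S. j \<noteq> i0 \<longrightarrow> (A $ j) \<bullet> d = 0)"
proof -
  have pd: "x \<noteq> 0 \<Longrightarrow> x \<bullet> (mat 1 *v x) > 0" for x :: "real^'n" by simp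
  have "\<exists>x l. (\<forall>i. i \<notin> S \<longrightarrow> l $ i = 0) \<and> mat 1 *v x + transpose A *v l = (0::real^'n) \<and> (\<forall>i\<in>S. (A $ i) \<bullet> x = axis i0 1 $ i)"
    by (rule kkt_surj[OF pd ind])
  then obtain x where x: "\<forall>i\<in>S. (A $ i) \<bullet> x = axis i0 1 $ i" by blast
  show ?thesis
  proof (intro exI[of _ x] conjI ballI impI)
    show "(A $ i0) \<bullet> x = 1" using x i0 by (simp add: axis_def)
    fix j assume "j \<in> S" "j \<noteq> i0" then show "(A $ j) \<bullet> x = 0" using x by (simp add: axis_def)
  qed
qed

locale drs =
  fixes H :: "real^'n^'n" and f :: "real^'n" and A :: "real^'n^'m" and b :: "real^'m"
    and \<rho> :: real and xstar :: "real^'n"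
  assumes pd: "\<forall>x. x \<noteq> 0 \<longrightarrow> x \<bullet> ((H + transpose H) *v x) > 0"
    and rho: "\<rho> > 0"
    and ne: "feasible A b \<noteq> {}"
    and avi1: "xstar \<in> feasible A b"
    and avi2: "\<forall>y\<in>feasible A b. (H *v xstar + f) \<bullet> (y - xstar) \<ge> 0"
begin

definition "S = Hsym H"
definition "R = \<rho> *\<^sub>R mat 1 + H"
definition "T = \<rho> *\<^sub>R mat 1 + (1/2) *\<^sub>R S"
definition "Mi = matrix_inv T"
definition "V e = (R *v e) \<bullet> (Mi *v (R *v e))"
definition "z3 y z = matrix_inv R *v (\<rho> *\<^sub>R y + H *v z + (1/2) *\<^sub>R (Hsym H *v (y - z)))"
definition "qs z = qp_sol \<rho> H f A b z"

lemma mu: "\<exists>\<mu>>0. \<forall>x. x \<bullet> (H *v x) \<ge> \<mu> * (norm x)^2"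
  by (rule pd_uniform[OF pd])

lemma Hpsd: "x \<bullet> (H *v x) \<ge> 0"
  using mu by (smt (verit) mult_nonneg_nonneg zero_le_power2)

lemma Hpd: "x \<noteq> 0 \<Longrightarrow> x \<bullet> (H *v x) > 0"
proof -
  assume "x \<noteq> 0"
  moreover obtain \<mu> where "\<mu> > 0" "\<forall>x. x \<bullet> (H *v x) \<ge> \<mu> * (norm x)^2" using mu by blast
  ultimately show ?thesis by (smt (verit) mult_pos_pos zero_less_norm_iff zero_less_power)
qed

lemma S_sym: "transpose S = S" by (simp add: S_def Hsym_transpose)
lemma S_quad: "x \<bullet> (S *v x) = x \<bullet> (H *v x)" by (simp add: S_def Hsym_quad)

lemma R_mv: "R *v x = \<rho> *\<^sub>R x + H *v x"
  unfolding R_def by (metis matrix_vector_mul_lid matrix_vector_mult_add_rdistrib scaleR_matrix_vector_assoc)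
lemma T_mv: "T *v x = \<rho> *\<^sub>R x + (1/2) *\<^sub>R (S *v x)"
  unfolding T_def by (metis matrix_vector_mul_lid matrix_vector_mult_add_rdistrib scaleR_matrix_vector_assoc)
lemma T_sym: "transpose T = T"
  unfolding T_def by (simp add: transpose_add' transpose_scalar S_sym)

lemma R_inv: "invertible R"
proof (rule pd_invertible)
  fix x :: "real^'n" assume "x \<noteq> 0"
  then have "x \<bullet> (H *v x) > 0" "x \<bullet> x > 0" using Hpd by auto
  moreover have "x \<bullet> (R *v x) = \<rho> * (x \<bullet> x) + x \<bullet> (H *v x)" by (simp add: R_mv inner_add_right)
  moreover have "\<rho> * (x \<bullet> x) > 0" using rho \<open>x \<bullet> x > 0\<close> by simp
  ultimately show "x \<bullet> (R *v x) > 0" by linarith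
qed

lemma T_inv: "invertible T"
proof (rule pd_invertible)
  fix x :: "real^'n" assume "x \<noteq> 0"
  then have "x \<bullet> (H *v x) > 0" "x \<bullet> x > 0" using Hpd by auto
  moreover have "x \<bullet> (T *v x) = \<rho> * (x \<bullet> x) + (1/2) * (x \<bullet> (H *v x))" by (simp add: T_mv inner_add_right S_quad)
  moreover have "\<rho> * (x \<bullet> x) > 0" using rho \<open>x \<bullet> x > 0\<close> by simp
  ultimately show "x \<bullet> (T *v x) > 0" by linarith
qed

lemma V_nonneg: "V e \<ge> 0"
proof -
  let ?v = "R *v e"
  let ?a = "Mi *v ?v"
  have "T *v ?a = ?v" unfolding Mi_def by (rule minv_vec(1)[OF T_inv])
  then have 1: "V e = ?a \<bullet> (T *v ?a)" by (simp add: V_def inner_commute)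
  have 2: "?a \<bullet> (T *v ?a) = \<rho> * (?a \<bullet> ?a) + (1/2) * (?a \<bullet> (S *v ?a))" by (simp add: T_mv inner_add_right)
  have 3: "?a \<bullet> (S *v ?a) \<ge> 0" using S_quad Hpsd by metis
  have 4: "?a \<bullet> ?a \<ge> 0" by simp
  show ?thesis unfolding 1 2 using 3 4 rho by simp
qed

lemma qs_vi: "qs z \<in> feasible A b \<and>
     (\<forall>x\<in>feasible A b. (Htil \<rho> H *v qs z + ftil \<rho> H f z) \<bullet> (x - qs z) \<ge> 0)"
  unfolding qs_def by (rule qp_sol_vi[OF pd rho ne])

lemma key_ineq:
  fixes z :: "real^'n"
  defines "e \<equiv> z - xstar" and "w \<equiv> qs z - z"
  shows "(R *v e) \<bullet> w \<le> - \<rho> * (w \<bullet> w) - (1/2) * (w \<bullet> (S *v w)) - (1/2) * (e \<bullet> (S *v e))"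
proof -
  let ?y = "qs z" and ?Q = "Htil \<rho> H"
  have v1: "(?Q *v ?y + ftil \<rho> H f z) \<bullet> (xstar - ?y) \<ge> 0" using qs_vi avi1 by blast
  have v2: "(H *v xstar + f) \<bullet> (?y - xstar) \<ge> 0" using avi2 qs_vi by blast
  have g: "?Q *v ?y + ftil \<rho> H f z = ?Q *v w + H *v z + f"
    by (simp add: ftil_def w_def matrix_vector_mult_diff_rdistrib matrix_vector_mult_diff_distrib algebra_simps)
  have ye: "?y - xstar = e + w" "xstar - ?y = - (e + w)" by (simp_all add: e_def w_def)
  have "(?Q *v w + H *v z + f) \<bullet> (- (e + w)) + (H *v xstar + f) \<bullet> (e + w) \<ge> 0"
    using v1 v2 g ye by simp
  then have a: "(?Q *v w + H *v e) \<bullet> (e + w) \<le> 0"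
    by (simp add: e_def matrix_vector_mult_diff_distrib inner_diff_left inner_add_left inner_add_right algebra_simps)
  have Qw: "?Q *v w = \<rho> *\<^sub>R w + S *v w" by (simp add: Htil_mv S_def)
  have s1: "(S *v w) \<bullet> e = w \<bullet> (S *v e)" by (rule sym_inner[OF S_sym])
  have He: "e \<bullet> (H *v e) = e \<bullet> (S *v e)" by (simp add: S_quad)
  have s2: "e \<bullet> (S *v w) = w \<bullet> (S *v e)" using sym_inner[OF S_sym, of w e] by (simp add: inner_commute)
  have a2: "(R *v e) \<bullet> w + w \<bullet> (S *v e) + \<rho> * (w \<bullet> w) + w \<bullet> (S *v w) + e \<bullet> (S *v e) \<le> 0"
    using a unfolding Qw R_mv
    by (simp add: inner_add_left inner_add_right s1 s2 He inner_commute algebra_simps)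
  have "(e + w) \<bullet> (S *v (e + w)) \<ge> 0" using Hpsd S_quad by metis
  then have "e \<bullet> (S *v e) + 2 * (w \<bullet> (S *v e)) + w \<bullet> (S *v w) \<ge> 0"
    using s1 by (simp add: matrix_vector_right_distrib inner_add_left inner_add_right inner_commute)
  then show ?thesis using a2 by linarith
qed

lemma z3_eq: "R *v (z3 y z - xstar) = R *v (z - xstar) + T *v (y - z)"
proof -
  have "R *v z3 y z = \<rho> *\<^sub>R y + H *v z + (1/2) *\<^sub>R (Hsym H *v (y - z))"
    unfolding z3_def by (rule minv_vec(1)[OF R_inv])
  then show ?thesis
    by (simp add: matrix_vector_mult_diff_distrib R_mv T_mv S_def algebra_simps)
qed

lemma V_step:
  fixes z :: "real^'n"
  shows "V (z3 (qs z) z - xstar) \<le> V (z - xstar) - \<rho> * norm (qs z - z) ^ 2 - (z - xstar) \<bullet> (H *v (z - xstar))"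
proof -
  let ?e = "z - xstar" and ?w = "qs z - z"
  let ?v = "R *v ?e"
  have Mv: "Mi *v (T *v ?w) = ?w" unfolding Mi_def by (rule minv_vec(2)[OF T_inv])
  have TM: "(T *v ?w) \<bullet> (Mi *v ?v) = ?v \<bullet> ?w"
  proof -
    have "(T *v ?w) \<bullet> (Mi *v ?v) = ?w \<bullet> (T *v (Mi *v ?v))" by (rule sym_inner[OF T_sym])
    also have "T *v (Mi *v ?v) = ?v" unfolding Mi_def by (rule minv_vec(1)[OF T_inv])
    finally show ?thesis by (simp add: inner_commute)
  qed
  have "V (z3 (qs z) z - xstar) = (?v + T *v ?w) \<bullet> (Mi *v (?v + T *v ?w))"
    by (simp add: V_def z3_eq)
  also have "\<dots> = ?v \<bullet> (Mi *v ?v) + ?v \<bullet> ?w + ((T *v ?w) \<bullet> (Mi *v ?v) + (T *v ?w) \<bullet> ?w)"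
    by (simp only: matrix_vector_right_distrib inner_add_left inner_add_right Mv)
  also have "\<dots> = V ?e + 2 * (?v \<bullet> ?w) + (T *v ?w) \<bullet> ?w"
    by (simp only: TM V_def)
  also have "(T *v ?w) \<bullet> ?w = ?w \<bullet> (T *v ?w)" by (rule inner_commute)
  also have "\<dots> = \<rho> * (?w \<bullet> ?w) + (1/2) * (?w \<bullet> (S *v ?w))"
    by (simp only: T_mv inner_add_right inner_scaleR_right)
  finally have eq: "V (z3 (qs z) z - xstar) = V ?e + 2 * (?v \<bullet> ?w) + (\<rho> * (?w \<bullet> ?w) + (1/2) * (?w \<bullet> (S *v ?w)))" .
  have k: "?v \<bullet> ?w \<le> - \<rho> * (?w \<bullet> ?w) - (1/2) * (?w \<bullet> (S *v ?w)) - (1/2) * (?e \<bullet> (S *v ?e))"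
    by (rule key_ineq)
  have "?w \<bullet> (S *v ?w) \<ge> 0" using Hpsd S_quad by metis
  moreover have "?e \<bullet> (S *v ?e) = ?e \<bullet> (H *v ?e)" by (rule S_quad)
  moreover have "\<rho> * norm ?w ^ 2 = \<rho> * (?w \<bullet> ?w)" by (simp add: power2_norm_eq_inner)
  moreover have "- \<rho> * (?w \<bullet> ?w) = - (\<rho> * (?w \<bullet> ?w))" by simp
  ultimately show ?thesis using eq k by linarith
qed

end

declare transpose_matrix_vector[simp del]

locale drs2 = drs H f A b \<rho> xstar
  for H :: "real^'n^'n" and f :: "real^'n" and A :: "real^'n^'m" and b :: "real^'m"
    and \<rho> :: real and xstar :: "real^'n" +
  fixes lamstar :: "real^'m" and sel :: "nat \<Rightarrow> 'm set \<Rightarrow> (real^'n) \<times> (real^'m)"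
  assumes licq: "\<forall>c. (\<Sum>i\<in>active_set A b xstar. c i *\<^sub>R (A $ i)) = 0
                  \<longrightarrow> (\<forall>i\<in>active_set A b xstar. c i = 0)"
    and kkt1: "H *v xstar + f + transpose A *v lamstar = 0"
    and kkt2: "\<forall>i. lamstar $ i \<ge> 0"
    and kkt3: "\<forall>i. lamstar $ i * (b $ i - (A $ i) \<bullet> xstar) = 0"
    and strict: "\<forall>i\<in>active_set A b xstar. lamstar $ i > 0"
    and selA: "\<And>k S. (\<exists>p. kkt_sol H f A b S p) \<Longrightarrow> kkt_sol H f A b S (sel k S)"
begin

abbreviation "Ast \<equiv> active_set A b xstar"

lemma kkt_sel: "kkt_sol H f A b (active_set A b y) (sel k (active_set A b y))"
  by (rule selA, rule kkt_exists[OF Hpd]) (auto simp: active_set_def)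

lemma sel_x: "fst (sel k (active_set A b y)) = fst (sel 0 (active_set A b y))"
  using kkt_x_unique[OF Hpd] kkt_sel[of y k] kkt_sel[of y 0] by (metis prod.collapse)

lemma lamstar_supp: "\<forall>i. i \<notin> Ast \<longrightarrow> lamstar $ i = 0"
  using kkt3 by (auto simp: active_set_def)

lemma kkt_star: "kkt_sol H f A b Ast (xstar, lamstar)"
proof -
  have "H *v xstar + transpose A *v lamstar = - f" using kkt1 by (simp add: eq_neg_iff_add_eq_0 algebra_simps)
  then show ?thesis using lamstar_supp by (simp add: kkt_sol_iff active_set_def)
qed

lemma kkt_Ast: assumes "kkt_sol H f A b Ast p" shows "p = (xstar, lamstar)"
proof -
  obtain x l where p: "p = (x, l)" by (cases p)
  have x: "x = xstar" using kkt_x_unique[OF Hpd] assms kkt_star p by blast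
  have s: "\<forall>i. i \<notin> Ast \<longrightarrow> l $ i = 0" and e: "H *v x + transpose A *v l = - f"
    using assms p by (auto simp: kkt_sol_iff)
  have e2: "H *v xstar + transpose A *v lamstar = - f" using kkt_star by (simp add: kkt_sol_iff)
  have d0: "\<forall>i. i \<notin> Ast \<longrightarrow> (l - lamstar) $ i = 0" using s lamstar_supp by simp
  have "transpose A *v (l - lamstar) = (H *v x + transpose A *v l) - (H *v xstar + transpose A *v lamstar)"
    using x by (simp add: matrix_vector_mult_diff_distrib)
  also have "\<dots> = 0" using e e2 by simp
  finally have "(\<Sum>i\<in>Ast. ((l - lamstar) $ i) *\<^sub>R (A $ i)) = 0" using AT_sum_S[OF d0, where A=A] by simp
  then have "\<forall>i\<in>Ast. (l - lamstar) $ i = 0" using licq by blast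
  then have "l = lamstar" using d0 unfolding vec_eq_iff by (metis vector_minus_component eq_iff_diff_eq_0)
  then show ?thesis using x p by simp
qed

lemma dr_step_eq:
  "dr_step \<rho> H f A b sel k (z, P, \<delta>) =
    (let y = qs z; Ak = active_set A b y in
     if P = Some Ak then
       (if (\<forall>i. snd (sel k Ak) $ i \<ge> 0) \<and> fst (sel k Ak) \<in> feasible A b then Inl (sel k Ak)
        else if ereal (norm (qs (fst (sel k Ak)) - fst (sel k Ak))) < \<delta>
          then Inr (z3 (qs (fst (sel k Ak))) (fst (sel k Ak)), Some (active_set A b (qs (fst (sel k Ak)))),
                    ereal (norm (qs (fst (sel k Ak)) - fst (sel k Ak))))
          else Inr (z3 y z, Some (active_set A b (qs (fst (sel k Ak)))), \<delta>))
     else Inr (z3 y z, Some Ak, \<delta>))"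
  unfolding dr_step_def Let_def qs_def z3_def R_def by (simp add: split_beta)

lemma step_Inl: assumes "dr_step \<rho> H f A b sel k s = Inl r" shows "r = (xstar, lamstar)"
proof -
  obtain z P \<delta> where s: "s = (z, P, \<delta>)" by (cases s)
  let ?Ak = "active_set A b (qs z)"
  have "P = Some ?Ak \<and> (\<forall>i. snd (sel k ?Ak) $ i \<ge> 0) \<and> fst (sel k ?Ak) \<in> feasible A b \<and> r = sel k ?Ak"
    using assms unfolding s dr_step_eq Let_def by (auto split: if_splits)
  moreover have "kkt_sol H f A b ?Ak (fst (sel k ?Ak), snd (sel k ?Ak))" using kkt_sel by simp
  ultimately show ?thesis
    using kkt_correct[OF Hpd avi1 avi2 licq kkt1 kkt3] by (metis prod.collapse)
qed

lemma run_Inl: "dr_run \<rho> H f A b sel z0 k = Inl r \<Longrightarrow> r = (xstar, lamstar)"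
proof (induction k)
  case 0 then show ?case by simp
next
  case (Suc k)
  show ?case
  proof (cases "dr_run \<rho> H f A b sel z0 k")
    case (Inl r') then show ?thesis using Suc by simp
  next
    case (Inr s) then show ?thesis using Suc step_Inl by simp
  qed
qed

definition "rr Sa = ereal (norm (qs (fst (sel 0 Sa)) - fst (sel 0 Sa)))"

lemma step_Inr:
  assumes "dr_step \<rho> H f A b sel k (z, P, \<delta>) = Inr (z', P', \<delta>')"
  shows "(\<delta>' = \<delta> \<and> z' = z3 (qs z) z) \<or> (\<delta>' < \<delta> \<and> \<delta>' \<in> range rr)"
    and "P \<noteq> Some (active_set A b (qs z)) \<Longrightarrow> P' = Some (active_set A b (qs z))"
    and "P = Some (active_set A b (qs z)) \<Longrightarrow> active_set A b (qs z) \<noteq> Ast"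
proof -
  let ?Ak = "active_set A b (qs z)"
  have rr: "ereal (norm (qs (fst (sel k ?Ak)) - fst (sel k ?Ak))) = rr ?Ak"
    unfolding rr_def using sel_x[of k "qs z"] by simp
  show "(\<delta>' = \<delta> \<and> z' = z3 (qs z) z) \<or> (\<delta>' < \<delta> \<and> \<delta>' \<in> range rr)"
  proof (cases "P = Some ?Ak")
    case False
    then show ?thesis using assms unfolding dr_step_eq Let_def by simp
  next
    case True
    let ?c = "ereal (norm (qs (fst (sel k ?Ak)) - fst (sel k ?Ak))) < \<delta>"
    show ?thesis
    proof (cases ?c)
      case c: True
      then have "\<delta>' = rr ?Ak" using assms True rr unfolding dr_step_eq Let_def by (auto split: if_splits)
      then show ?thesis using c rr by auto
    next
      case c: False
      then show ?thesis using assms True unfolding dr_step_eq Let_def by (auto split: if_splits)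
    qed
  qed
  show "P \<noteq> Some ?Ak \<Longrightarrow> P' = Some ?Ak"
    using assms unfolding dr_step_eq Let_def by (auto split: if_splits)
  show "P = Some ?Ak \<Longrightarrow> ?Ak \<noteq> Ast"
  proof
    assume P: "P = Some ?Ak" and e: "?Ak = Ast"
    have "sel k Ast = (xstar, lamstar)" using kkt_Ast kkt_sel[of "qs z" k] e by simp
    then show False using assms P e kkt2 avi1 unfolding dr_step_eq Let_def by simp
  qed
qed

end

declare transpose_matrix_vector[simp del]

lemma mv_tendsto: fixes M :: "real^'n^'k"
  assumes "X \<longlonglongrightarrow> x" shows "(\<lambda>j. M *v X j) \<longlonglongrightarrow> M *v x"
  by (rule bounded_linear.tendsto[OF matrix_vector_mul_bounded_linear assms])

context drs2 begin

lemma ident: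
  fixes Z :: "nat \<Rightarrow> real^'n"
  assumes Zl: "Z \<longlonglongrightarrow> xstar" and Yl: "(\<lambda>j. qs (Z j)) \<longlonglongrightarrow> xstar"
  shows "eventually (\<lambda>j. active_set A b (qs (Z j)) = Ast) sequentially"
proof -
  let ?Y = "\<lambda>j. qs (Z j)"
  have Yf: "?Y j \<in> feasible A b" for j using qs_vi by blast
  let ?g = "\<lambda>j. Htil \<rho> H *v ?Y j + ftil \<rho> H f (Z j)"
  have "?g \<longlonglongrightarrow> Htil \<rho> H *v xstar + (f + (H - Htil \<rho> H) *v xstar)"
    unfolding ftil_def by (intro tendsto_intros mv_tendsto Yl Zl)
  then have gl: "?g \<longlonglongrightarrow> H *v xstar + f" by (simp add: matrix_vector_mult_diff_rdistrib add.commute)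
  have Yi: "(\<lambda>j. (A $ i) \<bullet> ?Y j) \<longlonglongrightarrow> (A $ i) \<bullet> xstar" for i
    by (intro tendsto_intros Yl)
  have out: "eventually (\<lambda>j. (A $ i) \<bullet> ?Y j < b $ i) sequentially" if "i \<notin> Ast" for i
  proof -
    have "(A $ i) \<bullet> xstar \<le> b $ i" using avi1 by (simp add: feasible_def)
    moreover have "(A $ i) \<bullet> xstar \<noteq> b $ i" using that by (simp add: active_set_def)
    ultimately have "(A $ i) \<bullet> xstar < b $ i" by simp
    then show ?thesis by (rule order_tendstoD(2)[OF Yi])
  qed
  have inn: "eventually (\<lambda>j. (A $ i0) \<bullet> ?Y j = b $ i0) sequentially" if i0: "i0 \<in> Ast" for i0
  proof -
    obtain d where d1: "(A $ i0) \<bullet> d = 1" and d0: "\<forall>j\<in>Ast. j \<noteq> i0 \<longrightarrow> (A $ j) \<bullet> d = 0"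
      using direction[OF licq i0] by blast
    have hf: "H *v xstar + f = - (transpose A *v lamstar)" using kkt1 by (simp add: eq_neg_iff_add_eq_0)
    have "(transpose A *v lamstar) \<bullet> d = (\<Sum>i\<in>Ast. lamstar $ i * ((A $ i) \<bullet> d))"
      by (rule AT_inner_S[OF lamstar_supp])
    also have "\<dots> = lamstar $ i0 * ((A $ i0) \<bullet> d) + (\<Sum>i\<in>Ast - {i0}. lamstar $ i * ((A $ i) \<bullet> d))"
      using i0 by (simp add: sum.remove)
    also have "(\<Sum>i\<in>Ast - {i0}. lamstar $ i * ((A $ i) \<bullet> d)) = 0"
      using d0 by (intro sum.neutral) auto
    finally have "(H *v xstar + f) \<bullet> d = - lamstar $ i0" using hf d1 by simp
    moreover have "lamstar $ i0 > 0" using strict i0 by blast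
    ultimately have gneg: "(H *v xstar + f) \<bullet> d < 0" by simp
    have ev1: "eventually (\<lambda>j. ?g j \<bullet> d < 0) sequentially"
      by (rule order_tendstoD(2)[OF tendsto_inner[OF gl tendsto_const] gneg])
    have "eventually (\<lambda>t. \<forall>j. j \<notin> Ast \<longrightarrow> (A $ j) \<bullet> xstar + t * ((A $ j) \<bullet> d) < b $ j) (at_right (0::real))"
    proof (rule eventually_all_finite)
      fix j
      show "eventually (\<lambda>t. j \<notin> Ast \<longrightarrow> (A $ j) \<bullet> xstar + t * ((A $ j) \<bullet> d) < b $ j) (at_right (0::real))"
      proof (cases "j \<in> Ast")
        case True then show ?thesis by simp
      next
        case False
        have "(A $ j) \<bullet> xstar \<le> b $ j" using avi1 by (simp add: feasible_def)
        moreover have "(A $ j) \<bullet> xstar \<noteq> b $ j" using False by (simp add: active_set_def)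
        ultimately have lt: "(A $ j) \<bullet> xstar + 0 * ((A $ j) \<bullet> d) < b $ j" by simp
        have "((\<lambda>t. (A $ j) \<bullet> xstar + t * ((A $ j) \<bullet> d)) \<longlongrightarrow> (A $ j) \<bullet> xstar + 0 * ((A $ j) \<bullet> d)) (at_right (0::real))"
          by (intro tendsto_intros)
        from order_tendstoD(2)[OF this lt] show ?thesis by (rule eventually_mono) simp
      qed
    qed
    then obtain bb :: real where bb: "bb > 0" "\<And>t. t > 0 \<Longrightarrow> t < bb \<Longrightarrow> \<forall>j. j \<notin> Ast \<longrightarrow> (A $ j) \<bullet> xstar + t * ((A $ j) \<bullet> d) < b $ j"
      unfolding eventually_at_right_field by auto
    define t0 where "t0 = bb / 2"
    have t0: "t0 > 0" "\<forall>j. j \<notin> Ast \<longrightarrow> (A $ j) \<bullet> xstar + t0 * ((A $ j) \<bullet> d) < b $ j"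
    proof -
      show "t0 > 0" using bb by (simp add: t0_def)
      have "bb / 2 > 0" "bb / 2 < bb" using bb by auto
      then show "\<forall>j. j \<notin> Ast \<longrightarrow> (A $ j) \<bullet> xstar + t0 * ((A $ j) \<bullet> d) < b $ j"
        unfolding t0_def by (rule bb(2))
    qed
    have ev2: "eventually (\<lambda>k. \<forall>j. j \<notin> Ast \<longrightarrow> (A $ j) \<bullet> ?Y k + t0 * ((A $ j) \<bullet> d) < b $ j) sequentially"
    proof (rule eventually_all_finite)
      fix j
      show "eventually (\<lambda>k. j \<notin> Ast \<longrightarrow> (A $ j) \<bullet> ?Y k + t0 * ((A $ j) \<bullet> d) < b $ j) sequentially"
      proof (cases "j \<in> Ast")
        case True then show ?thesis by simp
      next
        case False
        have "((\<lambda>k. (A $ j) \<bullet> ?Y k + t0 * ((A $ j) \<bullet> d)) \<longlongrightarrow> (A $ j) \<bullet> xstar + t0 * ((A $ j) \<bullet> d)) sequentially"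
          by (intro tendsto_intros Yl)
        from order_tendstoD(2)[OF this] t0(2) False show ?thesis by (auto elim: eventually_mono)
      qed
    qed
    show ?thesis
    proof (rule eventually_mono[OF eventually_conj[OF ev1 ev2]])
      fix k assume asm: "?g k \<bullet> d < 0 \<and> (\<forall>j. j \<notin> Ast \<longrightarrow> (A $ j) \<bullet> ?Y k + t0 * ((A $ j) \<bullet> d) < b $ j)"
      let ?y = "?Y k"
      have yle: "(A $ i0) \<bullet> ?y \<le> b $ i0" using Yf[of k] by (simp add: feasible_def)
      show "(A $ i0) \<bullet> ?y = b $ i0"
      proof (rule ccontr)
        assume "(A $ i0) \<bullet> ?y \<noteq> b $ i0"
        then have slack: "b $ i0 - (A $ i0) \<bullet> ?y > 0" using yle by simp
        define t where "t = min t0 (b $ i0 - (A $ i0) \<bullet> ?y)"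
        have tpos: "t > 0" using t0(1) slack by (simp add: t_def)
        have tle: "t \<le> t0" "t \<le> b $ i0 - (A $ i0) \<bullet> ?y" by (simp_all add: t_def)
        let ?x = "?y + t *\<^sub>R d"
        have xf: "?x \<in> feasible A b"
          unfolding feasible_def
        proof (intro CollectI allI)
          fix j
          have ax: "(A $ j) \<bullet> ?x = (A $ j) \<bullet> ?y + t * ((A $ j) \<bullet> d)" by (simp add: inner_add_right)
          have yj: "(A $ j) \<bullet> ?y \<le> b $ j" using Yf[of k] by (simp add: feasible_def)
          show "(A $ j) \<bullet> ?x \<le> b $ j"
          proof (cases "j \<in> Ast")
            case True
            show ?thesis
            proof (cases "j = i0")
              case True then show ?thesis using ax d1 tle(2) by simp
            next
              case False then show ?thesis using ax d0 \<open>j \<in> Ast\<close> yj by simp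
            qed
          next
            case False
            show ?thesis
            proof (cases "(A $ j) \<bullet> d \<le> 0")
              case True
              then have "t * ((A $ j) \<bullet> d) \<le> 0" using tpos by (simp add: mult_nonneg_nonpos)
              then show ?thesis using ax yj by simp
            next
              case c: False
              then have "t * ((A $ j) \<bullet> d) \<le> t0 * ((A $ j) \<bullet> d)" using tle(1) by (simp add: mult_right_mono)
              then show ?thesis using ax asm False by (smt (verit))
            qed
          qed
        qed
        have "?g k \<bullet> (?x - ?y) \<ge> 0" using qs_vi xf by blast
        then have "t * (?g k \<bullet> d) \<ge> 0" by simp
        then have "?g k \<bullet> d \<ge> 0" using tpos by (simp add: zero_le_mult_iff)
        then show False using asm by simp
      qed
    qed
  qed
  have "eventually (\<lambda>j. \<forall>i. (i \<in> Ast \<longrightarrow> (A $ i) \<bullet> ?Y j = b $ i) \<and> (i \<notin> Ast \<longrightarrow> (A $ i) \<bullet> ?Y j < b $ i)) sequentially"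
  proof (rule eventually_all_finite)
    fix i
    show "eventually (\<lambda>j. (i \<in> Ast \<longrightarrow> (A $ i) \<bullet> ?Y j = b $ i) \<and> (i \<notin> Ast \<longrightarrow> (A $ i) \<bullet> ?Y j < b $ i)) sequentially"
    proof (cases "i \<in> Ast")
      case True then show ?thesis using inn[OF True] by (auto elim: eventually_mono)
    next
      case False then show ?thesis using out[OF False] by (auto elim: eventually_mono)
    qed
  qed
  then show ?thesis
  proof (rule eventually_mono)
    fix j assume h: "\<forall>i. (i \<in> Ast \<longrightarrow> (A $ i) \<bullet> ?Y j = b $ i) \<and> (i \<notin> Ast \<longrightarrow> (A $ i) \<bullet> ?Y j < b $ i)"
    show "active_set A b (?Y j) = Ast"
    proof (rule set_eqI)
      fix i show "i \<in> active_set A b (?Y j) \<longleftrightarrow> i \<in> Ast"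
        using h[rule_format, of i] by (cases "i \<in> Ast") (auto simp: active_set_def[of A b "?Y j"])
    qed
  qed
qed

end

declare transpose_matrix_vector[simp del]

lemma finite_decseq_const:
  fixes d :: "nat \<Rightarrow> 'a::linorder"
  assumes F: "finite F" and inF: "\<And>k. d k \<in> F" and dec: "\<And>k. d (Suc k) \<le> d k"
  shows "\<exists>K. \<forall>k\<ge>K. d k = d K"
proof -
  have fin: "finite (range d)" using F inF by (metis finite_subset image_subsetI)
  let ?m = "Min (range d)"
  have "?m \<in> range d" using fin by (intro Min_in) auto
  then obtain K where K: "d K = ?m" by auto
  have ds: "decseq d" using dec by (simp add: decseq_Suc_iff)
  show ?thesis
  proof (intro exI allI impI)
    fix k assume "k \<ge> K"
    then have "d k \<le> d K" using ds by (simp add: decseqD)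
    moreover have "?m \<le> d k" using fin by simp
    ultimately show "d k = d K" using K by simp
  qed
qed

context drs2 begin

lemma never_stop_false:
  assumes nstop: "\<And>k. \<exists>s. dr_run \<rho> H f A b sel z0 k = Inr s"
  shows False
proof -
  define st where "st k = projr (dr_run \<rho> H f A b sel z0 k)" for k
  have run: "dr_run \<rho> H f A b sel z0 k = Inr (st k)" for k
    using nstop[of k] by (auto simp: st_def)
  define zz where "zz k = fst (st k)" for k
  define PP where "PP k = fst (snd (st k))" for k
  define dd where "dd k = snd (snd (st k))" for k
  have stc: "st k = (zz k, PP k, dd k)" for k by (simp add: zz_def PP_def dd_def)
  have step: "dr_step \<rho> H f A b sel k (zz k, PP k, dd k) = Inr (zz (Suc k), PP (Suc k), dd (Suc k))" for k
    using run[of "Suc k"] run[of k] stc[of k] stc[of "Suc k"] by simp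
  note SI = step_Inr[OF step]
  have dd0: "dd 0 = \<infinity>" using run[of 0] stc[of 0] by simp
  have inF: "dd k \<in> insert \<infinity> (range rr)" for k
  proof (induction k)
    case 0 then show ?case using dd0 by simp
  next
    case (Suc k) then show ?case using SI(1)[of k] by auto
  qed
  have dec: "dd (Suc k) \<le> dd k" for k using SI(1)[of k] by auto
  have finF: "finite (insert \<infinity> (range rr))" by simp
  obtain K where K: "\<And>k. k \<ge> K \<Longrightarrow> dd k = dd K" using finite_decseq_const[where d=dd, OF finF inF dec] by blast
  have noreplace: "zz (Suc k) = z3 (qs (zz k)) (zz k)" if "k \<ge> K" for k
  proof -
    have "dd (Suc k) = dd k" using K[of k] K[of "Suc k"] that by simp
    then show ?thesis using SI(1)[of k] by auto
  qed
  define Z where "Z j = zz (K + j)" for j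
  have Zs: "Z (Suc j) = z3 (qs (Z j)) (Z j)" for j using noreplace[of "K + j"] by (simp add: Z_def)
  obtain \<mu> where mu: "\<mu> > 0" "\<And>x. x \<bullet> (H *v x) \<ge> \<mu> * (norm x)^2" using mu by blast
  define t where "t j = \<rho> * norm (qs (Z j) - Z j) ^ 2 + \<mu> * norm (Z j - xstar) ^ 2" for j
  have tnn: "t j \<ge> 0" for j using rho mu(1) by (simp add: t_def)
  have Vs: "V (Z (Suc j) - xstar) \<le> V (Z j - xstar) - t j" for j
    using V_step[of "Z j"] mu(2)[of "Z j - xstar"] unfolding Zs t_def by linarith
  have psum: "(\<Sum>i<n. t i) \<le> V (Z 0 - xstar) - V (Z n - xstar)" for n
  proof (induction n)
    case 0 then show ?case by simp
  next
    case (Suc n) then show ?case using Vs[of n] by simp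
  qed
  have "(\<Sum>i<n. t i) \<le> V (Z 0 - xstar)" for n using psum[of n] V_nonneg[of "Z n - xstar"] by linarith
  then have "summable t" using tnn by (intro summableI_nonneg_bounded) auto
  then have t0: "t \<longlonglongrightarrow> 0" by (rule summable_LIMSEQ_zero)
  have sq1: "(\<lambda>j. sqrt (t j / \<mu>)) \<longlonglongrightarrow> 0" using tendsto_real_sqrt[OF tendsto_divide_zero[OF t0, of \<mu>]] by simp
  have sq2: "(\<lambda>j. sqrt (t j / \<rho>)) \<longlonglongrightarrow> 0" using tendsto_real_sqrt[OF tendsto_divide_zero[OF t0, of \<rho>]] by simp
  have b1: "norm (Z j - xstar) \<le> sqrt (t j / \<mu>)" for j
  proof -
    have "\<mu> * norm (Z j - xstar) ^ 2 \<le> t j" using rho by (simp add: t_def)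
    then have "norm (Z j - xstar) ^ 2 \<le> t j / \<mu>" using mu(1) by (simp add: field_simps)
    then show ?thesis by (rule real_le_rsqrt)
  qed
  have b2: "norm (qs (Z j) - Z j) \<le> sqrt (t j / \<rho>)" for j
  proof -
    have "\<rho> * norm (qs (Z j) - Z j) ^ 2 \<le> t j" using mu(1) by (simp add: t_def)
    then have "norm (qs (Z j) - Z j) ^ 2 \<le> t j / \<rho>" using rho by (simp add: field_simps)
    then show ?thesis by (rule real_le_rsqrt)
  qed
  have n1: "(\<lambda>j. norm (Z j - xstar)) \<longlonglongrightarrow> 0"
    by (rule tendsto_sandwich[OF _ _ tendsto_const sq1]) (auto intro: always_eventually b1)
  have n2: "(\<lambda>j. norm (qs (Z j) - Z j)) \<longlonglongrightarrow> 0"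
    by (rule tendsto_sandwich[OF _ _ tendsto_const sq2]) (auto intro: always_eventually b2)
  have Zl: "Z \<longlonglongrightarrow> xstar"
    using tendsto_norm_zero_cancel[OF n1] by (simp add: LIM_zero_iff)
  have "(\<lambda>j. qs (Z j) - Z j) \<longlonglongrightarrow> 0" using tendsto_norm_zero_cancel[OF n2] .
  then have "(\<lambda>j. (qs (Z j) - Z j) + Z j) \<longlonglongrightarrow> 0 + xstar" by (intro tendsto_add Zl)
  then have Yl: "(\<lambda>j. qs (Z j)) \<longlonglongrightarrow> xstar" by simp
  obtain N where N: "\<And>j. j \<ge> N \<Longrightarrow> active_set A b (qs (Z j)) = Ast"
    using ident[OF Zl Yl] unfolding eventually_sequentially by blast
  let ?k = "K + N"
  have a1: "active_set A b (qs (zz ?k)) = Ast" using N[of N] by (simp add: Z_def)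
  have a2: "active_set A b (qs (zz (Suc ?k))) = Ast" using N[of "Suc N"] by (simp add: Z_def)
  show False
  proof (cases "PP ?k = Some (active_set A b (qs (zz ?k)))")
    case True then show False using SI(3)[of ?k] a1 by simp
  next
    case False
    then have "PP (Suc ?k) = Some Ast" using SI(2)[of ?k] a1 by simp
    then show False using SI(3)[of "Suc ?k"] a2 by simp
  qed
qed

end

theorem theorem2:
  fixes H :: "real^'n^'n" and f :: "real^'n" and A :: "real^'n^'m" and b :: "real^'m"
    and \<rho> :: real and z0 :: "real^'n"
    and xstar :: "real^'n" and lamstar :: "real^'m"
    and sel :: "nat \<Rightarrow> 'm set \<Rightarrow> (real^'n) \<times> (real^'m)"
  assumes nonempty: "feasible A b \<noteq> {}"
    and pd: "\<forall>x. x \<noteq> 0 \<longrightarrow> x \<bullet> ((H + transpose H) *v x) > 0"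
    and rho: "\<rho> > 0"
    and avi: "xstar \<in> feasible A b"
        "\<forall>y\<in>feasible A b. (H *v xstar + f) \<bullet> (y - xstar) \<ge> 0"
    and licq: "\<forall>c. (\<Sum>i\<in>active_set A b xstar. c i *\<^sub>R (A $ i)) = 0
                  \<longrightarrow> (\<forall>i\<in>active_set A b xstar. c i = 0)"
    and kkt: "H *v xstar + f + transpose A *v lamstar = 0"
        "\<forall>i. lamstar $ i \<ge> 0"
        "\<forall>i. lamstar $ i * (b $ i - (A $ i) \<bullet> xstar) = 0"
    and strict: "\<forall>i\<in>active_set A b xstar. lamstar $ i > 0"
    and sel: "\<And>k S. (\<exists>p. kkt_sol H f A b S p) \<Longrightarrow> kkt_sol H f A b S (sel k S)"
  shows "\<exists>k. dr_run \<rho> H f A b sel z0 k = Inl (xstar, lamstar)"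
proof -
  interpret drs2 H f A b \<rho> xstar lamstar sel
  proof unfold_locales
    show "\<forall>x. x \<noteq> 0 \<longrightarrow> x \<bullet> ((H + transpose H) *v x) > 0" by (rule pd)
    show "\<rho> > 0" by (rule rho)
    show "feasible A b \<noteq> {}" by (rule nonempty)
    show "xstar \<in> feasible A b" by (rule avi(1))
    show "\<forall>y\<in>feasible A b. (H *v xstar + f) \<bullet> (y - xstar) \<ge> 0" by (rule avi(2))
    show "\<forall>c. (\<Sum>i\<in>active_set A b xstar. c i *\<^sub>R (A $ i)) = 0
                  \<longrightarrow> (\<forall>i\<in>active_set A b xstar. c i = 0)" by (rule licq)
    show "H *v xstar + f + transpose A *v lamstar = 0" by (rule kkt(1))
    show "\<forall>i. lamstar $ i \<ge> 0" by (rule kkt(2))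
    show "\<forall>i. lamstar $ i * (b $ i - (A $ i) \<bullet> xstar) = 0" by (rule kkt(3))
    show "\<forall>i\<in>active_set A b xstar. lamstar $ i > 0" by (rule strict)
    show "\<And>k S. (\<exists>p. kkt_sol H f A b S p) \<Longrightarrow> kkt_sol H f A b S (sel k S)" by (rule sel)
  qed
  show ?thesis
  proof (cases "\<exists>k r. dr_run \<rho> H f A b sel z0 k = Inl r")
    case True
    then obtain k r where kr: "dr_run \<rho> H f A b sel z0 k = Inl r" by blast
    then have "r = (xstar, lamstar)" by (rule run_Inl)
    then show ?thesis using kr by blast
  next
    case False
    have "\<exists>s. dr_run \<rho> H f A b sel z0 k = Inr s" for k
      using False by (cases "dr_run \<rho> H f A b sel z0 k") auto
    then have False by (rule never_stop_false)
    then show ?thesis ..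
  qed
qed

end
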